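(* Let $X$ be a variety of dimension $k$ with at worst isolated quotient singularities, let $y\in X$, and let $\varrho:(\mathbb{C}^k,0)\to(X,y)$ be the quotient map (a local biholomorphism if $y$ is smooth). Then there exists a constant $C_y\geq1$ such that $$\operatorname{ord}_y\phi\leq\operatorname{ord}_0(\phi\circ\varrho)\leq C_y\operatorname{ord}_y\phi$$ for every holomorphic germ $\phi\in\mathcal{O}_{X,y}$. If $y$ is smooth one can take $C_y=1$.
   Context: $y\in X$ is an isolated quotient singularity if there is a finite group $G_y\subset GL(k,\mathbb{C})$ acting freely on $\mathbb{C}^k\setminus\{0\}$ with $(X,y)\cong(\mathbb{C}^k,0)/G_y$; the quotient map $\varrho$ is the induced map $(\mathbb{C}^k,0)\to(\mathbb{C}^k,0)/G_y\cong(X,y)$. For $\phi\in\mathcal{O}_{X,y}$, $\operatorname{ord}_y(\phi)=\max\{s\in\mathbb{N}:\phi\in\mathfrak{m}_y^s\}$ where $\mathfrak{m}_y$ is the maximal ideal of $\mathcal{O}_{X,y}$. *)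

theory Defs
  imports "HOL-Analysis.Analysis"
begin

text \<open>Holomorphic function germs at the origin of C^k, where k = CARD('n):
  complex-differentiable (Frechet derivative complex-linear) on a ball around 0.\<close>
definition holo_germ :: "(complex^'n \<Rightarrow> complex) \<Rightarrow> bool" where
  "holo_germ f \<longleftrightarrow> (\<exists>r>0. \<forall>z\<in>ball 0 r. \<exists>L. (f has_derivative L) (at z) \<and>
       (\<forall>c v. L (c *s v) = c * L v))"

text \<open>Germs invariant under a finite linear group G: the local ring of the
  quotient (C^k,0)/G, pulled back along the quotient map.\<close>
definition inv_germs :: "(complex^'n^'n) set \<Rightarrow> (complex^'n \<Rightarrow> complex) set" where
  "inv_germs G = {f. holo_germ f \<and> (\<forall>g\<in>G. \<forall>\<^sub>F z in nhds 0. f (g *v z) = f z)}"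

definition germ_eq :: "(complex^'n \<Rightarrow> complex) \<Rightarrow> (complex^'n \<Rightarrow> complex) \<Rightarrow> bool" where
  "germ_eq f h \<longleftrightarrow> (\<forall>\<^sub>F z in nhds 0. f z = h z)"

definition max_ideal :: "(complex^'n \<Rightarrow> complex) set \<Rightarrow> (complex^'n \<Rightarrow> complex) set" where
  "max_ideal R = {f\<in>R. f 0 = 0}"

fun ideal_pow :: "(complex^'n \<Rightarrow> complex) set \<Rightarrow> nat \<Rightarrow> (complex^'n \<Rightarrow> complex) set" where
  "ideal_pow R 0 = R"
| "ideal_pow R (Suc s) = {f. f \<in> R \<and> (\<exists>(n::nat) a b. (\<forall>i<n. a i \<in> max_ideal R \<and> b i \<in> ideal_pow R s)
      \<and> germ_eq f (\<lambda>z. \<Sum>i<n. a i z * b i z))}"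

definition germ_ord :: "(complex^'n \<Rightarrow> complex) set \<Rightarrow> (complex^'n \<Rightarrow> complex) \<Rightarrow> nat" where
  "germ_ord R f = (GREATEST s. f \<in> ideal_pow R s)"

end

theory Submission
  imports Defs "HOL-Complex_Analysis.Complex_Analysis"
begin


definition clin :: "(complex^'n \<Rightarrow> complex) \<Rightarrow> bool" where
  "clin L \<longleftrightarrow> (\<forall>c v. L (c *s v) = c * L v)"

definition hpt :: "(complex^'n \<Rightarrow> complex) \<Rightarrow> complex^'n \<Rightarrow> bool" where
  "hpt f z \<longleftrightarrow> (\<exists>L. (f has_derivative L) (at z) \<and> clin L)"

lemma holo_ev: "holo_germ f \<longleftrightarrow> eventually (hpt f) (nhds 0)"
  unfolding holo_germ_def eventually_nhds_metric hpt_def clin_def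
  by (auto simp: dist_commute)

lemma hpt_const: "hpt (\<lambda>_. c) z"
  unfolding hpt_def clin_def by (rule exI[of _ "\<lambda>_. 0"]) auto

lemma hpt_add: "hpt f z \<Longrightarrow> hpt g z \<Longrightarrow> hpt (\<lambda>x. f x + g x) z"
  unfolding hpt_def clin_def
  apply (elim exE conjE)
  subgoal for L1 L2 by (rule exI[of _ "\<lambda>v. L1 v + L2 v"]) (auto intro: has_derivative_add simp: algebra_simps)
  done

lemma hpt_mult: "hpt f z \<Longrightarrow> hpt g z \<Longrightarrow> hpt (\<lambda>x. f x * g x) z"
  unfolding hpt_def clin_def
  apply (elim exE conjE)
  subgoal for L1 L2 apply (rule exI[of _ "\<lambda>v. f z * L2 v + L1 v * g z"]) apply (intro conjI) apply (rule has_derivative_mult; assumption) by (simp add: algebra_simps)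
  done

lemma hpt_comp: "hpt f (A *v z) \<Longrightarrow> hpt (\<lambda>x. f (A *v x)) z"
  unfolding hpt_def clin_def
  apply (elim exE conjE)
  subgoal for L
    apply (rule exI[of _ "\<lambda>v. L (A *v v)"])
    apply (intro conjI)
     apply (rule has_derivative_compose[of "\<lambda>x. A *v x" "\<lambda>x. A *v x", unfolded o_def])
      apply (rule bounded_linear_imp_has_derivative) apply simp
     apply assumption
    apply (simp add: vector_scalar_commute)
    done
  done

lemma holo_const: "holo_germ (\<lambda>_. c)"
  unfolding holo_ev by (rule always_eventually) (simp add: hpt_const)

lemma holo_add: "holo_germ f \<Longrightarrow> holo_germ g \<Longrightarrow> holo_germ (\<lambda>x. f x + g x)"
  unfolding holo_ev by (auto elim: eventually_elim2 intro: hpt_add)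

lemma holo_mult: "holo_germ f \<Longrightarrow> holo_germ g \<Longrightarrow> holo_germ (\<lambda>x. f x * g x)"
  unfolding holo_ev by (auto elim: eventually_elim2 intro: hpt_mult)

lemma ev_comp:
  fixes A :: "complex^'n^'n"
  assumes "eventually P (nhds 0)"
  shows "eventually (\<lambda>x. P (A *v x)) (nhds 0)"
proof -
  have "((\<lambda>x. A *v x) \<longlongrightarrow> A *v 0) (nhds 0)"
    by (rule bounded_linear.tendsto[OF matrix_vector_mul_bounded_linear filterlim_ident])
  hence "filterlim (\<lambda>x. A *v x) (nhds 0) (nhds 0)" by simp
  thus ?thesis using assms by (simp add: filterlim_iff)
qed

lemma holo_comp: "holo_germ f \<Longrightarrow> holo_germ (\<lambda>x. f ((A::complex^'n^'n) *v x))"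
  unfolding holo_ev by (drule ev_comp[where A=A]) (auto elim: eventually_mono intro: hpt_comp)

lemma holo_minus: "holo_germ f \<Longrightarrow> holo_germ (\<lambda>x. - f x)"
  using holo_mult[OF holo_const[of "-1"]] by simp

lemma holo_sum: "finite S \<Longrightarrow> (\<And>i. i \<in> S \<Longrightarrow> holo_germ (f i)) \<Longrightarrow> holo_germ (\<lambda>x. \<Sum>i\<in>S. f i x)"
  by (induction S rule: finite_induct) (auto intro: holo_add holo_const)

lemma holo_prod: "finite S \<Longrightarrow> (\<And>i. i \<in> S \<Longrightarrow> holo_germ (f i)) \<Longrightarrow> holo_germ (\<lambda>x. \<Prod>i\<in>S. f i x)"
  by (induction S rule: finite_induct) (auto intro: holo_mult holo_const)

lemma holo_pow: "holo_germ f \<Longrightarrow> holo_germ (\<lambda>x. f x ^ n)"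
  by (induction n) (auto intro: holo_mult holo_const)

lemma germ_eq_refl: "germ_eq f f" by (simp add: germ_eq_def)
lemma germ_eq_sym: "germ_eq f g \<Longrightarrow> germ_eq g f" by (simp add: germ_eq_def eq_commute)
lemma germ_eq_trans: "germ_eq f g \<Longrightarrow> germ_eq g h \<Longrightarrow> germ_eq f h"
  unfolding germ_eq_def by (auto elim: eventually_elim2)
lemma germ_eq_add: "germ_eq f g \<Longrightarrow> germ_eq f' g' \<Longrightarrow> germ_eq (\<lambda>x. f x + f' x) (\<lambda>x. g x + g' x)"
  unfolding germ_eq_def by (auto elim: eventually_elim2)
lemma germ_eq_mult: "germ_eq f g \<Longrightarrow> germ_eq f' g' \<Longrightarrow> germ_eq (\<lambda>x. f x * f' x) (\<lambda>x. g x * g' x)"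
  unfolding germ_eq_def by (auto elim: eventually_elim2)
lemma germ_eq_comp: "germ_eq f g \<Longrightarrow> germ_eq (\<lambda>x. f ((A::complex^'n^'n) *v x)) (\<lambda>x. g (A *v x))"
  unfolding germ_eq_def by (rule ev_comp)
lemma germ_eq_0: "germ_eq f g \<Longrightarrow> f 0 = g 0"
  unfolding germ_eq_def by (auto simp: eventually_nhds)

lemma holo_germ_eq: "holo_germ f \<Longrightarrow> germ_eq f g \<Longrightarrow> holo_germ g"
  unfolding holo_ev germ_eq_def
proof -
  assume a: "eventually (hpt f) (nhds 0)" "eventually (\<lambda>z. f z = g z) (nhds 0)"
  from a(2) have "eventually (\<lambda>y. eventually (\<lambda>z. f z = g z) (nhds y)) (nhds 0)"
    by (simp add: eventually_eventually)
  with a(1) show "eventually (hpt g) (nhds 0)"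
  proof (rule eventually_elim2)
    fix y assume "hpt f y" "eventually (\<lambda>z. f z = g z) (nhds y)"
    then obtain L where L: "(f has_derivative L) (at y)" "clin L" "eventually (\<lambda>z. f z = g z) (nhds y)"
      unfolding hpt_def by blast
    have "(g has_derivative L) (at y)"
      apply (rule has_derivative_transform_eventually[OF L(1)])
      using L(3) by (auto simp: eventually_at_filter eventually_nhds elim: eventually_mono)
    thus "hpt g y" using L(2) unfolding hpt_def by blast
  qed
qed


lemma ru_sum:
  fixes m e :: nat assumes m: "m \<ge> 1"
  defines "W \<equiv> \<lambda>p::nat. exp (2 * of_real pi * \<i> * of_nat p / of_nat m)"
  shows "(\<Sum>l<m. W (l * e)) = (if m dvd e then of_nat m else 0)"
proof -
  have Wl: "W (l * e) = W e ^ l" for l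
    unfolding W_def by (simp add: exp_of_nat_mult[symmetric] mult_ac)
  have We: "W e = 1 \<longleftrightarrow> m dvd e" unfolding W_def by (rule complex_root_unity_eq_1[OF m])
  have Wm: "W e ^ m = 1"
    using complex_root_unity_eq_1[OF m, of "m * e"] Wl[of m] unfolding W_def by (simp add: mult_ac)
  show ?thesis
  proof (cases "m dvd e")
    case True thus ?thesis using We by (simp add: Wl)
  next
    case False
    hence "W e \<noteq> 1" using We by simp
    thus ?thesis using False by (simp add: Wl geometric_sum Wm)
  qed
qed

lemma ru_extract:
  fixes a b :: complex and n :: nat assumes n: "n \<ge> 1"
  defines "W \<equiv> \<lambda>p::nat. exp (2 * of_real pi * \<i> * of_nat p / of_nat (Suc n))"
  shows "(\<Sum>l<Suc n. W (l * n) * (a + W l * b) ^ n) = of_nat (Suc n) * of_nat n * a ^ (n - 1) * b"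
proof -
  have Wadd: "W p * W q = W (p + q)" for p q
    unfolding W_def by (simp add: exp_add[symmetric] add_divide_distrib distrib_left)
  have Wpow: "W l ^ j = W (l * j)" for l j
    unfolding W_def by (simp add: exp_of_nat_mult[symmetric] mult_ac)
  have "(\<Sum>l<Suc n. W (l * n) * (a + W l * b) ^ n)
      = (\<Sum>l<Suc n. \<Sum>j\<le>n. of_nat (n choose j) * b ^ j * a ^ (n - j) * W (l * (n + j)))"
    apply (rule sum.cong, simp)
    apply (subst add.commute, subst binomial_ring)
    apply (simp add: sum_distrib_left power_mult_distrib Wpow)
    apply (rule sum.cong, simp)
    by (simp add: mult_ac Wadd distrib_left add.commute)
  also have "\<dots> = (\<Sum>j\<le>n. of_nat (n choose j) * b ^ j * a ^ (n - j) * (\<Sum>l<Suc n. W (l * (n + j))))"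
    by (subst sum.swap) (simp only: sum_distrib_left)
  also have "\<dots> = (\<Sum>j\<le>n. if j = 1 then of_nat (Suc n) * of_nat n * a ^ (n - 1) * b else 0)"
  proof (rule sum.cong, simp)
    fix j assume j: "j \<in> {..n}"
    have "Suc n dvd (n + j) \<longleftrightarrow> j = 1"
    proof
      assume d: "Suc n dvd (n + j)"
      then obtain k where k: "n + j = Suc n * k" by (auto elim: dvdE)
      show "j = 1"
      proof (cases k)
        case 0 thus ?thesis using k n by simp
      next
        case (Suc k') thus ?thesis using k j by (cases k') auto
      qed
    qed auto
    thus "of_nat (n choose j) * b ^ j * a ^ (n - j) * (\<Sum>l<Suc n. W (l * (n + j))) =
          (if j = 1 then of_nat (Suc n) * of_nat n * a ^ (n - 1) * b else 0)"
      using ru_sum[of "Suc n" "n + j"] unfolding W_def by auto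
  qed
  also have "\<dots> = of_nat (Suc n) * of_nat n * a ^ (n - 1) * b"
    using n by (simp add: sum.delta)
  finally show ?thesis .
qed


inductive_set gid :: "(complex^'n \<Rightarrow> complex) set \<Rightarrow> (complex^'n \<Rightarrow> complex) set" for A where
  zero: "(\<lambda>_. 0) \<in> gid A"
| gen: "a \<in> A \<Longrightarrow> holo_germ h \<Longrightarrow> (\<lambda>z. a z * h z) \<in> gid A"
| add: "f \<in> gid A \<Longrightarrow> g \<in> gid A \<Longrightarrow> (\<lambda>z. f z + g z) \<in> gid A"
| geq: "f \<in> gid A \<Longrightarrow> germ_eq g f \<Longrightarrow> g \<in> gid A"

lemma gid_mult: "f \<in> gid A \<Longrightarrow> holo_germ k \<Longrightarrow> (\<lambda>z. f z * k z) \<in> gid A"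
proof (induction f rule: gid.induct)
  case zero thus ?case by (simp add: gid.zero)
next
  case (gen a h) 
  have "(\<lambda>z. a z * (h z * k z)) \<in> gid A" using gen by (intro gid.gen holo_mult) auto
  thus ?case by (simp add: mult.assoc)
next
  case (add f g)
  have "(\<lambda>z. f z * k z + g z * k z) \<in> gid A" using add by (intro gid.add) auto
  thus ?case by (simp add: distrib_right)
next
  case (geq f g) 
  show ?case by (rule gid.geq[OF geq.IH[OF geq.prems]]) (rule germ_eq_mult[OF geq.hyps(2) germ_eq_refl])
qed

lemma gid_cmult: "f \<in> gid A \<Longrightarrow> (\<lambda>z. c * f z) \<in> gid A"
  using gid_mult[OF _ holo_const[of c]] by (simp add: mult.commute)

lemma gid_lmult: "f \<in> gid A \<Longrightarrow> (\<forall>q\<in>A. (\<lambda>z. a z * q z) \<in> gid B) \<Longrightarrow> (\<lambda>z. a z * f z) \<in> gid B"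
proof (induction f rule: gid.induct)
  case zero thus ?case by (simp add: gid.zero)
next
  case (gen q h) 
  have "(\<lambda>z. (a z * q z) * h z) \<in> gid B" using gen by (intro gid_mult[of "\<lambda>z. a z * q z"]) auto
  thus ?case by (simp add: mult.assoc)
next
  case (add f g)
  have "(\<lambda>z. a z * f z + a z * g z) \<in> gid B" using add by (intro gid.add) auto
  thus ?case by (simp add: distrib_left)
next
  case (geq f g)
  show ?case by (rule gid.geq[OF geq.IH[OF geq.prems]]) (rule germ_eq_mult[OF germ_eq_refl geq.hyps(2)])
qed

lemma gid_prod: "f \<in> gid A \<Longrightarrow> g \<in> gid B \<Longrightarrow> (\<forall>a\<in>A. \<forall>b\<in>B. (\<lambda>z. a z * b z) \<in> gid C)
   \<Longrightarrow> (\<lambda>z. f z * g z) \<in> gid C"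
proof (induction f rule: gid.induct)
  case zero thus ?case by (simp add: gid.zero)
next
  case (gen a h) 
  have "(\<lambda>z. a z * g z) \<in> gid C" using gen by (intro gid_lmult[of g B]) auto
  hence "(\<lambda>z. a z * g z * h z) \<in> gid C" using gen(2) by (rule gid_mult)
  moreover have "(\<lambda>z. a z * h z * g z) = (\<lambda>z. a z * g z * h z)" by (simp add: mult_ac)
  ultimately show ?case by simp
next
  case (add f f')
  have "(\<lambda>z. f z * g z + f' z * g z) \<in> gid C" using add by (intro gid.add) auto
  thus ?case by (simp add: distrib_right)
next
  case (geq f f')
  show ?case by (rule gid.geq[OF geq.IH[OF geq.prems]]) (rule germ_eq_mult[OF geq.hyps(2) germ_eq_refl])
qed

lemma gid_trans: "f \<in> gid A \<Longrightarrow> (\<forall>a\<in>A. a \<in> gid B) \<Longrightarrow> f \<in> gid B"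
proof (induction f rule: gid.induct)
  case zero thus ?case by (simp add: gid.zero)
next
  case (gen a h) thus ?case by (intro gid_mult[of a]) auto
next
  case (add f g) thus ?case by (intro gid.add) auto
next
  case (geq f g) thus ?case by (intro gid.geq[of f B g]) auto
qed

lemma gid_sum: "(\<And>i. i < (n::nat) \<Longrightarrow> f i \<in> gid A) \<Longrightarrow> (\<lambda>z. \<Sum>i<n. f i z) \<in> gid A"
proof (induction n)
  case 0 thus ?case by (simp add: gid.zero)
next
  case (Suc n)
  have "(\<lambda>z. (\<Sum>i<n. f i z) + f n z) \<in> gid A" using Suc by (intro gid.add[of "\<lambda>z. \<Sum>i<n. f i z" A "f n"]) auto
  thus ?case by simp
qed

lemma gid_holo: "f \<in> gid A \<Longrightarrow> (\<forall>a\<in>A. holo_germ a) \<Longrightarrow> holo_germ f"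
proof (induction f rule: gid.induct)
  case zero show ?case by (rule holo_const)
next
  case (gen a h) thus ?case by (intro holo_mult) auto
next
  case (add f g) thus ?case by (intro holo_add) auto
next
  case (geq f g) thus ?case using holo_germ_eq[OF _ germ_eq_sym[OF geq.hyps(2)]] by blast
qed

lemma gid_self: "a \<in> A \<Longrightarrow> a \<in> gid A"
proof -
  assume "a \<in> A"
  hence "(\<lambda>z. a z * (\<lambda>_. 1) z) \<in> gid A" by (intro gid.gen holo_const)
  thus ?thesis by simp
qed


lemma ip_suc_iff: "f \<in> ideal_pow R (Suc s) \<longleftrightarrow> f \<in> R \<and> (\<exists>(n::nat) a b. (\<forall>i<n. a i \<in> max_ideal R \<and> b i \<in> ideal_pow R s)
      \<and> germ_eq f (\<lambda>z. \<Sum>i<n. a i z * b i z))"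
  by (simp only: ideal_pow.simps mem_Collect_eq)

lemma ip_sub: "ideal_pow R (Suc s) \<subseteq> ideal_pow R s"
proof (induction s)
  case 0 show ?case by (auto simp only: ip_suc_iff ideal_pow.simps(1))
next
  case (Suc s)
  show ?case
  proof
    fix f assume "f \<in> ideal_pow R (Suc (Suc s))"
    then obtain n :: nat and a b where "f \<in> R" "\<forall>i<n. a i \<in> max_ideal R \<and> b i \<in> ideal_pow R (Suc s)"
      "germ_eq f (\<lambda>z. \<Sum>i<n. a i z * b i z)" using ip_suc_iff[of f R "Suc s"] by blast
    thus "f \<in> ideal_pow R (Suc s)" unfolding ip_suc_iff[of f R s] using Suc by blast
  qed
qed

lemma ip_mono: "s \<le> t \<Longrightarrow> ideal_pow R t \<subseteq> ideal_pow R s"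
proof (induction t rule: dec_induct)
  case base show ?case by simp
next
  case (step t) thus ?case using ip_sub[of R t] by blast
qed

lemma ip_R: "ideal_pow R s \<subseteq> R"
proof (cases s)
  case 0 thus ?thesis by simp
next
  case (Suc t) thus ?thesis using ip_suc_iff by blast
qed

lemma ip_zero: "(\<lambda>_. 0) \<in> R \<Longrightarrow> (\<lambda>_. 0) \<in> ideal_pow R s"
proof (cases s)
  case 0 thus "(\<lambda>_. 0) \<in> R \<Longrightarrow> (\<lambda>_. 0) \<in> ideal_pow R s" by simp
next
  case (Suc t)
  assume "(\<lambda>_. 0) \<in> R"
  thus ?thesis unfolding Suc ip_suc_iff
    by (intro conjI exI[of _ "0::nat"]) (simp_all add: germ_eq_refl)
qed

lemma ip_geq: "f \<in> R \<Longrightarrow> germ_eq f g \<Longrightarrow> g \<in> ideal_pow R s \<Longrightarrow> f \<in> ideal_pow R s"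
proof (cases s)
  case 0 thus "f \<in> R \<Longrightarrow> germ_eq f g \<Longrightarrow> g \<in> ideal_pow R s \<Longrightarrow> f \<in> ideal_pow R s" by simp
next
  case (Suc t)
  assume a: "f \<in> R" "germ_eq f g" "g \<in> ideal_pow R s"
  then obtain n :: nat and a b where "\<forall>i<n. a i \<in> max_ideal R \<and> b i \<in> ideal_pow R t"
      "germ_eq g (\<lambda>z. \<Sum>i<n. a i z * b i z)" using ip_suc_iff[of g R t] Suc by blast
  thus ?thesis unfolding Suc ip_suc_iff using a germ_eq_trans by blast
qed

lemma sum_concat:
  fixes p q :: nat and f g :: "nat \<Rightarrow> complex"
  shows "(\<Sum>i<p + q. (if i < p then f i else g (i - p))) = (\<Sum>i<p. f i) + (\<Sum>i<q. g i)"
  by (induction q) (auto simp: add.commute)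

lemma ip_add:
  assumes R: "\<forall>f\<in>R. \<forall>g\<in>R. (\<lambda>z. f z + g z) \<in> R" and f: "f \<in> ideal_pow R s" and g: "g \<in> ideal_pow R s"
  shows "(\<lambda>z. f z + g z) \<in> ideal_pow R s"
proof (cases s)
  case 0 thus ?thesis using assms by simp
next
  case (Suc t)
  from f Suc obtain n1 :: nat and a1 b1 where 1: "f \<in> R" "\<forall>i<n1. a1 i \<in> max_ideal R \<and> b1 i \<in> ideal_pow R t"
     "germ_eq f (\<lambda>z. \<Sum>i<n1. a1 i z * b1 i z)" using ip_suc_iff[of f R t] by blast
  from g Suc obtain n2 :: nat and a2 b2 where 2: "g \<in> R" "\<forall>i<n2. a2 i \<in> max_ideal R \<and> b2 i \<in> ideal_pow R t"
     "germ_eq g (\<lambda>z. \<Sum>i<n2. a2 i z * b2 i z)" using ip_suc_iff[of g R t] by blast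
  define a where "a i = (if i < n1 then a1 i else a2 (i - n1))" for i
  define b where "b i = (if i < n1 then b1 i else b2 (i - n1))" for i
  have eq: "(\<lambda>z. \<Sum>i<n1 + n2. a i z * b i z) = (\<lambda>z. (\<Sum>i<n1. a1 i z * b1 i z) + (\<Sum>i<n2. a2 i z * b2 i z))"
  proof
    fix z
    have "(\<Sum>i<n1 + n2. a i z * b i z) = (\<Sum>i<n1 + n2. (if i < n1 then a1 i z * b1 i z else a2 (i - n1) z * b2 (i - n1) z))"
      unfolding a_def b_def by (rule sum.cong) auto
    thus "(\<Sum>i<n1 + n2. a i z * b i z) = (\<Sum>i<n1. a1 i z * b1 i z) + (\<Sum>i<n2. a2 i z * b2 i z)"
      using sum_concat[where p=n1 and q=n2 and f="\<lambda>i. a1 i z * b1 i z" and g="\<lambda>i. a2 i z * b2 i z"] by simp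
  qed
  have "germ_eq (\<lambda>z. f z + g z) (\<lambda>z. \<Sum>i<n1 + n2. a i z * b i z)"
    unfolding eq by (rule germ_eq_add[OF 1(3) 2(3)])
  moreover have "\<forall>i<n1 + n2. a i \<in> max_ideal R \<and> b i \<in> ideal_pow R t"
    using 1(2) 2(2) unfolding a_def b_def by auto
  moreover have "(\<lambda>z. f z + g z) \<in> R" using R 1(1) 2(1) by blast
  ultimately show ?thesis unfolding Suc ip_suc_iff by blast
qed


definition m1 :: "(complex^'n \<Rightarrow> complex) set" where
  "m1 = {a. holo_germ a \<and> a 0 = 0}"

fun Q1 :: "nat \<Rightarrow> (complex^'n \<Rightarrow> complex) set" where
  "Q1 0 = {\<lambda>_. 1}"
| "Q1 (Suc k) = {f. \<exists>a q. a \<in> m1 \<and> q \<in> Q1 k \<and> f = (\<lambda>z. a z * q z)}"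

fun PG :: "(complex^'n^'n) set \<Rightarrow> nat \<Rightarrow> (complex^'n \<Rightarrow> complex) set" where
  "PG G 0 = {\<lambda>_. 1}"
| "PG G (Suc k) = {f. \<exists>a q. a \<in> max_ideal (inv_germs G) \<and> q \<in> PG G k \<and> f = (\<lambda>z. a z * q z)}"

lemma inv_germs_one: "inv_germs {mat 1} = {f. holo_germ f}"
  by (auto simp: inv_germs_def)

lemma max_ideal_one: "max_ideal (inv_germs {mat 1}) = m1"
  by (auto simp: max_ideal_def m1_def inv_germs_one)

lemma Q1_split: "q \<in> Q1 (a + b) \<Longrightarrow> \<exists>q1\<in>Q1 a. \<exists>q2\<in>Q1 b. q = (\<lambda>z. q1 z * q2 z)"
proof (induction a arbitrary: q)
  case 0 thus ?case by auto
next
  case (Suc a)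
  then obtain x q' where x: "x \<in> m1" "q' \<in> Q1 (a + b)" "q = (\<lambda>z. x z * q' z)" by auto
  from Suc.IH[OF x(2)] obtain q1 q2 where "q1 \<in> Q1 a" "q2 \<in> Q1 b" "q' = (\<lambda>z. q1 z * q2 z)" by blast
  note q = this
  have "(\<lambda>z. x z * q1 z) \<in> Q1 (Suc a)" using x(1) q(1) by auto
  moreover have "q = (\<lambda>z. (x z * q1 z) * q2 z)" using x(3) q(3) by (simp add: mult.assoc)
  moreover have "\<exists>q2'\<in>Q1 b. q = (\<lambda>z. (\<lambda>z. x z * q1 z) z * q2' z)"
    using bexI[of "\<lambda>y. q = (\<lambda>z. (\<lambda>z. x z * q1 z) z * y z)" q2 "Q1 b"] q(2) calculation(2) by simp
  ultimately show ?case using bexI[of "\<lambda>p. \<exists>q2\<in>Q1 b. q = (\<lambda>z. p z * q2 z)" "\<lambda>z. x z * q1 z" "Q1 (Suc a)"] by simp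
qed

lemma K6: "f \<in> ideal_pow (inv_germs {mat 1}) m \<Longrightarrow> f \<in> gid (Q1 m)"
proof (induction m arbitrary: f)
  case 0
  hence "(\<lambda>z. (\<lambda>_. 1) z * f z) \<in> gid (Q1 0)" by (intro gid.gen) (auto simp: inv_germs_one)
  thus ?case by simp
next
  case (Suc m)
  then obtain n :: nat and a b where ab: "\<forall>i<n. a i \<in> max_ideal (inv_germs {mat 1}) \<and> b i \<in> ideal_pow (inv_germs {mat 1}) m"
      "germ_eq f (\<lambda>z. \<Sum>i<n. a i z * b i z)" using ip_suc_iff[of f _ m] by blast
  have "(\<lambda>z. a i z * b i z) \<in> gid (Q1 (Suc m))" if i: "i < n" for i
  proof (rule gid_lmult)
    show "b i \<in> gid (Q1 m)" using Suc.IH ab i by blast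
    show "\<forall>q\<in>Q1 m. (\<lambda>z. a i z * q z) \<in> gid (Q1 (Suc m))"
      using ab i by (auto intro!: gid_self simp: max_ideal_one)
  qed
  hence "(\<lambda>z. \<Sum>i<n. a i z * b i z) \<in> gid (Q1 (Suc m))" by (rule gid_sum)
  thus ?case using ab(2) by (rule gid.geq)
qed

locale fgrp =
  fixes G :: "(complex^'n^'n) set"
  assumes fin: "finite G" and one: "mat 1 \<in> G" and mul: "\<forall>g\<in>G. \<forall>h\<in>G. g ** h \<in> G"
    and inv: "\<forall>g\<in>G. invertible g"
begin

lemma card_pos: "card G > 0" using fin one card_gt_0_iff by blast

lemma inj_right: "h \<in> G \<Longrightarrow> inj_on (\<lambda>g. g ** h) X"
proof -
  assume h: "h \<in> G"
  obtain h' where h': "h ** h' = mat 1" using inv h unfolding invertible_def by blast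
  show "inj_on (\<lambda>g. g ** h) X"
  proof (rule inj_onI)
    fix x y assume "x ** h = y ** h"
    hence "x ** h ** h' = y ** h ** h'" by simp
    thus "x = y" by (simp add: matrix_mul_assoc[symmetric] h')
  qed
qed

lemma bij_right: "h \<in> G \<Longrightarrow> bij_betw (\<lambda>g. g ** h) G G"
proof -
  assume h: "h \<in> G"
  have "(\<lambda>g. g ** h) ` G = G" using endo_inj_surj[OF fin _ inj_right[OF h]] mul h by auto
  thus ?thesis using inj_right[OF h] by (simp add: bij_betw_def)
qed

abbreviation "RG \<equiv> inv_germs G"
abbreviation "mG \<equiv> max_ideal (inv_germs G)"

lemma RG_holo: "f \<in> RG \<Longrightarrow> holo_germ f" by (simp add: inv_germs_def)

lemma RG_const: "(\<lambda>_. c) \<in> RG" by (simp add: inv_germs_def holo_const)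

lemma RG_op:
  assumes f: "f \<in> RG" and g: "g \<in> RG" and H: "holo_germ (\<lambda>z. F (f z) (g z))"
  shows "(\<lambda>z. F (f z) (g z)) \<in> RG"
  unfolding inv_germs_def
proof (intro CollectI conjI ballI)
  show "holo_germ (\<lambda>z. F (f z) (g z))" by (rule H)
  fix h assume "h \<in> G"
  hence "eventually (\<lambda>z. f (h *v z) = f z) (nhds 0)" "eventually (\<lambda>z. g (h *v z) = g z) (nhds 0)"
    using f g unfolding inv_germs_def by auto
  thus "eventually (\<lambda>z. F (f (h *v z)) (g (h *v z)) = F (f z) (g z)) (nhds 0)"
    by (rule eventually_elim2) simp
qed

lemma RG_add: "f \<in> RG \<Longrightarrow> g \<in> RG \<Longrightarrow> (\<lambda>z. f z + g z) \<in> RG"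
  by (rule RG_op[where F="(+)"], assumption, assumption, rule holo_add[OF RG_holo RG_holo])

lemma RG_mult: "f \<in> RG \<Longrightarrow> g \<in> RG \<Longrightarrow> (\<lambda>z. f z * g z) \<in> RG"
  by (rule RG_op[where F="(*)"], assumption, assumption, rule holo_mult[OF RG_holo RG_holo])

definition rey :: "(complex^'n \<Rightarrow> complex) \<Rightarrow> complex^'n \<Rightarrow> complex" where
  "rey f = (\<lambda>z. (\<Sum>g\<in>G. f (g *v z)) / of_nat (card G))"

lemma rey_exact: "h \<in> G \<Longrightarrow> rey f (h *v z) = rey f z"
proof -
  assume h: "h \<in> G"
  have "(\<Sum>g\<in>G. f (g *v (h *v z))) = (\<Sum>g\<in>G. f ((g ** h) *v z))"
    by (simp add: matrix_vector_mul_assoc)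
  also have "\<dots> = (\<Sum>g\<in>G. f (g *v z))"
    by (rule sum.reindex_bij_betw[OF bij_right[OF h], of "\<lambda>g. f (g *v z)"])
  finally show ?thesis unfolding rey_def by simp
qed

lemma rey_holo: "holo_germ f \<Longrightarrow> holo_germ (rey f)"
proof -
  assume f: "holo_germ f"
  have "holo_germ (\<lambda>z. (\<Sum>g\<in>G. f (g *v z)) * inverse (of_nat (card G)))"
    using f fin by (intro holo_mult[OF _ holo_const] holo_sum[OF fin] holo_comp)
  thus ?thesis unfolding rey_def by (simp add: divide_inverse)
qed

lemma rey_RG: "holo_germ f \<Longrightarrow> rey f \<in> RG"
  unfolding inv_germs_def using rey_holo rey_exact by auto

lemma rey_of_inv: "f \<in> RG \<Longrightarrow> germ_eq f (rey f)"
proof -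
  assume f: "f \<in> RG"
  have "eventually (\<lambda>z. \<forall>g\<in>G. f (g *v z) = f z) (nhds 0)"
    using f fin unfolding inv_germs_def by (simp add: eventually_ball_finite_distrib)
  thus ?thesis unfolding germ_eq_def rey_def
  proof (rule eventually_mono)
    fix z assume "\<forall>g\<in>G. f (g *v z) = f z"
    hence "(\<Sum>g\<in>G. f (g *v z)) = of_nat (card G) * f z" by simp
    thus "f z = (\<Sum>g\<in>G. f (g *v z)) / of_nat (card G)" using card_pos by simp
  qed
qed

lemma rey_add: "rey (\<lambda>z. f z + g z) = (\<lambda>z. rey f z + rey g z)"
  unfolding rey_def by (simp add: sum.distrib add_divide_distrib)

lemma rey_zero: "rey (\<lambda>_. 0) = (\<lambda>_. 0)"
  unfolding rey_def by simp

lemma rey_geq: "germ_eq f g \<Longrightarrow> germ_eq (rey f) (rey g)"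
proof -
  assume "germ_eq f g"
  hence "\<forall>h\<in>G. eventually (\<lambda>z. f (h *v z) = g (h *v z)) (nhds 0)"
    using germ_eq_comp unfolding germ_eq_def by blast
  hence "eventually (\<lambda>z. \<forall>h\<in>G. f (h *v z) = g (h *v z)) (nhds 0)"
    using fin by (simp add: eventually_ball_finite_distrib)
  thus ?thesis unfolding germ_eq_def rey_def
  proof (rule eventually_mono)
    fix z assume "\<forall>h\<in>G. f (h *v z) = g (h *v z)"
    hence "(\<Sum>h\<in>G. f (h *v z)) = (\<Sum>h\<in>G. g (h *v z))" by (intro sum.cong) auto
    thus "(\<Sum>h\<in>G. f (h *v z)) / of_nat (card G) = (\<Sum>h\<in>G. g (h *v z)) / of_nat (card G)" by simp
  qed
qed

lemma rey_pmult: "p \<in> RG \<Longrightarrow> germ_eq (rey (\<lambda>z. p z * h z)) (\<lambda>z. p z * rey h z)"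
proof -
  assume p: "p \<in> RG"
  have "eventually (\<lambda>z. \<forall>g\<in>G. p (g *v z) = p z) (nhds 0)"
    using p fin unfolding inv_germs_def by (simp add: eventually_ball_finite_distrib)
  thus ?thesis unfolding germ_eq_def rey_def
  proof (rule eventually_mono)
    fix z assume "\<forall>g\<in>G. p (g *v z) = p z"
    hence "(\<Sum>g\<in>G. p (g *v z) * h (g *v z)) = (\<Sum>g\<in>G. p z * h (g *v z))" by (intro sum.cong) auto
    also have "\<dots> = p z * (\<Sum>g\<in>G. h (g *v z))" by (simp add: sum_distrib_left)
    finally show "(\<Sum>g\<in>G. p (g *v z) * h (g *v z)) / of_nat (card G) = p z * ((\<Sum>g\<in>G. h (g *v z)) / of_nat (card G))"
      by simp
  qed
qed

lemma PG_RG: "p \<in> PG G s \<Longrightarrow> p \<in> RG"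
proof (induction s arbitrary: p)
  case 0 thus ?case using RG_const by simp
next
  case (Suc s)
  then obtain c q where cq: "c \<in> mG" "q \<in> PG G s" "p = (\<lambda>z. c z * q z)" by auto
  have "c \<in> RG" using cq(1) by (simp add: max_ideal_def)
  thus ?case using RG_mult[of c q] Suc.IH[OF cq(2)] cq(3) by simp
qed

lemma PGR: "p \<in> PG G s \<Longrightarrow> r \<in> RG \<Longrightarrow> (\<lambda>z. p z * r z) \<in> ideal_pow RG s"
proof (induction s arbitrary: p r)
  case 0 thus ?case by simp
next
  case (Suc s)
  then obtain c q where cq: "c \<in> mG" "q \<in> PG G s" "p = (\<lambda>z. c z * q z)" by auto
  have qr: "(\<lambda>z. q z * r z) \<in> ideal_pow RG s" using Suc cq by blast
  have inR: "(\<lambda>z. p z * r z) \<in> RG" by (rule RG_mult[OF PG_RG[OF Suc.prems(1)] Suc.prems(2)])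
  have "germ_eq (\<lambda>z. p z * r z) (\<lambda>z. \<Sum>i<(1::nat). (\<lambda>_. c) i z * (\<lambda>_ z. q z * r z) i z)"
    unfolding cq by (simp add: mult.assoc germ_eq_refl)
  thus ?case unfolding ip_suc_iff using inR cq(1) qr
    by (intro conjI exI[of _ "1::nat"] exI[of _ "\<lambda>_. c"] exI[of _ "\<lambda>_ z. q z * r z"]) auto
qed

lemma ip_RG_add: "f \<in> ideal_pow RG s \<Longrightarrow> g \<in> ideal_pow RG s \<Longrightarrow> (\<lambda>z. f z + g z) \<in> ideal_pow RG s"
proof -
  have "\<forall>f\<in>RG. \<forall>g\<in>RG. (\<lambda>z. f z + g z) \<in> RG" using RG_add by blast
  thus "f \<in> ideal_pow RG s \<Longrightarrow> g \<in> ideal_pow RG s \<Longrightarrow> (\<lambda>z. f z + g z) \<in> ideal_pow RG s" by (rule ip_add)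
qed

lemma K7: "f \<in> gid (PG G s) \<Longrightarrow> rey f \<in> ideal_pow RG s"
proof (induction f rule: gid.induct)
  case zero show ?case unfolding rey_zero by (rule ip_zero[OF RG_const])
next
  case (gen a h)
  have aR: "a \<in> RG" using gen PG_RG by blast
  have "(\<lambda>z. a z * rey h z) \<in> ideal_pow RG s" using gen rey_RG PGR by blast
  moreover have "rey (\<lambda>z. a z * h z) \<in> RG" using gen aR by (intro rey_RG holo_mult[OF RG_holo])
  ultimately show ?case using rey_pmult[OF aR] ip_geq by blast
next
  case (add f g) show ?case unfolding rey_add by (rule ip_RG_add[OF add.IH])
next
  case (geq f g)
  have "holo_germ f" using geq.hyps(1) PG_RG RG_holo by (intro gid_holo) auto
  hence "holo_germ g" using holo_germ_eq germ_eq_sym geq.hyps(2) by blast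
  thus ?case using ip_geq[OF rey_RG rey_geq[OF geq.hyps(2)] geq.IH] by blast
qed

end


context fgrp
begin

definition EE :: "(complex^'n \<Rightarrow> complex) \<Rightarrow> nat \<Rightarrow> complex^'n \<Rightarrow> complex" where
  "EE x j z = (\<Sum>B\<in>{B. B \<in> Pow G \<and> card B = j}. \<Prod>a\<in>B. - x (a *v z))"

lemma SJ_fin: "finite {B. B \<in> Pow G \<and> card B = j}"
  using fin by (rule finite_subset[rotated, OF finite_Pow_iff[THEN iffD2]]) auto

lemma EE0: "EE x 0 z = 1"
proof -
  have "{B. B \<in> Pow G \<and> card B = 0} = {{}}"
    using fin by (auto dest: finite_subset)
  thus ?thesis unfolding EE_def by simp
qed

lemma EE_poly: "x z ^ card G = (\<Sum>j<card G. EE x (Suc j) z * (- (x z ^ (card G - Suc j))))"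
proof -
  let ?N = "card G"
  let ?P = "\<lambda>B. \<Prod>a\<in>B. - x (a *v z)"
  have "0 = (\<Prod>a\<in>G. - x (a *v z) + x z)"
    using one by (intro prod_zero[OF fin, symmetric]) (auto intro!: bexI[of _ "mat 1"])
  also have "\<dots> = (\<Sum>B\<in>Pow G. ?P B * (\<Prod>a\<in>G - B. x z))" by (rule prod_add[OF fin])
  also have "\<dots> = (\<Sum>B\<in>Pow G. ?P B * x z ^ (?N - card B))"
  proof (rule sum.cong, simp)
    fix B assume "B \<in> Pow G"
    hence "card (G - B) = ?N - card B" using fin by (auto intro: card_Diff_subset finite_subset)
    thus "?P B * (\<Prod>a\<in>G - B. x z) = ?P B * x z ^ (?N - card B)" by simp
  qed
  also have "\<dots> = (\<Sum>j\<in>{..?N}. \<Sum>B\<in>{B. B \<in> Pow G \<and> card B = j}. ?P B * x z ^ (?N - card B))"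
    by (rule sum.group[symmetric]) (use fin in \<open>auto intro: card_mono\<close>)
  also have "\<dots> = (\<Sum>j\<in>{..?N}. EE x j z * x z ^ (?N - j))"
    unfolding EE_def sum_distrib_right by (intro sum.cong) auto
  also have "\<dots> = x z ^ ?N + (\<Sum>j<?N. EE x (Suc j) z * x z ^ (?N - Suc j))"
    by (subst sum.atMost_shift) (simp add: EE0)
  finally have "x z ^ ?N = - (\<Sum>j<?N. EE x (Suc j) z * x z ^ (?N - Suc j))"
    by (simp add: eq_neg_iff_add_eq_0)
  thus ?thesis by (simp add: sum_negf)
qed

lemma EE_mG: "x \<in> m1 \<Longrightarrow> EE x (Suc j) \<in> mG"
proof -
  assume x: "x \<in> m1"
  let ?S = "{B. B \<in> Pow G \<and> card B = Suc j}"
  have hx: "holo_germ x" using x by (simp add: m1_def)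
  have holo: "holo_germ (EE x (Suc j))"
    unfolding EE_def
  proof (rule holo_sum[OF SJ_fin])
    fix B assume "B \<in> ?S"
    hence "finite B" using fin by (auto intro: finite_subset)
    thus "holo_germ (\<lambda>z. \<Prod>a\<in>B. - x (a *v z))"
      by (rule holo_prod) (rule holo_minus[OF holo_comp[OF hx]])
  qed
  have zero: "EE x (Suc j) 0 = 0"
    unfolding EE_def
  proof (rule sum.neutral, rule ballI)
    fix B assume B: "B \<in> ?S"
    hence "finite B" "B \<noteq> {}" using fin by (auto intro: finite_subset)
    then obtain a where "a \<in> B" by blast
    thus "(\<Prod>a\<in>B. - x (a *v 0)) = 0" using x \<open>finite B\<close> by (intro prod_zero) (auto simp: m1_def)
  qed
  have exact: "EE x (Suc j) (h *v z) = EE x (Suc j) z" if h: "h \<in> G" for h z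
  proof -
    let ?f = "\<lambda>g. g ** h"
    let ?F = "\<lambda>B. \<Prod>a\<in>B. - x (a *v z)"
    have injG: "inj_on ?f G" by (rule inj_right[OF h])
    have "(\<Prod>a\<in>B. - x (a *v (h *v z))) = ?F (?f ` B)" if "B \<in> ?S" for B
    proof -
      have "inj_on ?f B" by (rule inj_right[OF h])
      thus ?thesis by (simp add: prod.reindex matrix_vector_mul_assoc)
    qed
    hence "EE x (Suc j) (h *v z) = (\<Sum>B\<in>?S. ?F (?f ` B))" unfolding EE_def by (intro sum.cong) auto
    also have "\<dots> = (\<Sum>B\<in>?S. ?F B)"
    proof (rule sum.reindex_bij_betw)
      have inj: "inj_on (image ?f) ?S"
        using inj_on_image_Pow[OF injG] by (rule inj_on_subset) auto
      have sub: "image ?f ` ?S \<subseteq> ?S"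
      proof
        fix C assume "C \<in> image ?f ` ?S"
        then obtain B where B: "B \<in> ?S" "C = ?f ` B" by blast
        have "C \<subseteq> G" using B mul h by auto
        moreover have "card C = card B" using B(2) card_image[OF inj_right[OF h]] by simp
        ultimately show "C \<in> ?S" using B by auto
      qed
      show "bij_betw (image ?f) ?S ?S"
        using endo_inj_surj[OF SJ_fin sub inj] inj by (simp add: bij_betw_def)
    qed
    finally show ?thesis unfolding EE_def .
  qed
  show ?thesis unfolding max_ideal_def inv_germs_def using holo zero exact by auto
qed

lemma K1: "x \<in> m1 \<Longrightarrow> (\<lambda>z. x z ^ card G) \<in> gid mG"
proof -
  assume x: "x \<in> m1"
  have hx: "holo_germ x" using x by (simp add: m1_def)
  have "(\<lambda>z. \<Sum>j<card G. EE x (Suc j) z * (- (x z ^ (card G - Suc j)))) \<in> gid mG"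
    by (rule gid_sum, rule gid.gen[OF EE_mG[OF x]], rule holo_minus[OF holo_pow[OF hx]])
  thus ?thesis by (subst EE_poly) simp
qed

lemma m1_lin: "x \<in> m1 \<Longrightarrow> y \<in> m1 \<Longrightarrow> (\<lambda>z. x z + c * y z) \<in> m1"
  unfolding m1_def by (auto intro!: holo_add holo_mult[OF holo_const])

lemma K2: "k \<le> card G \<Longrightarrow> x \<in> m1 \<Longrightarrow> Y \<in> Q1 k \<Longrightarrow> (\<lambda>z. x z ^ (card G - k) * Y z) \<in> gid mG"
proof (induction k arbitrary: x Y)
  case 0 thus ?case using K1 by simp
next
  case (Suc k)
  then obtain y Y' where yY: "y \<in> m1" "Y' \<in> Q1 k" "Y = (\<lambda>z. y z * Y' z)" by auto
  define n where "n = card G - k"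
  have n: "n \<ge> 1" using Suc.prems(1) n_def by simp
  define W where "W = (\<lambda>p::nat. exp (2 * of_real pi * \<i> * of_nat p / of_nat (Suc n) :: complex))"
  have "(\<lambda>z. W (l * n) * ((x z + W l * y z) ^ n * Y' z)) \<in> gid mG" for l
    unfolding n_def using Suc.prems(1) by (intro gid_cmult Suc.IH m1_lin Suc.prems(2) yY) auto
  hence "(\<lambda>z. \<Sum>l<Suc n. W (l * n) * ((x z + W l * y z) ^ n * Y' z)) \<in> gid mG"
    by (intro gid_sum)
  hence "(\<lambda>z. inverse (of_nat (Suc n) * of_nat n) * (\<Sum>l<Suc n. W (l * n) * ((x z + W l * y z) ^ n * Y' z))) \<in> gid mG"
    by (rule gid_cmult)
  moreover have "inverse (of_nat (Suc n) * of_nat n) * (\<Sum>l<Suc n. W (l * n) * ((x z + W l * y z) ^ n * Y' z))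
      = x z ^ (card G - Suc k) * Y z" for z
  proof -
    have "(\<Sum>l<Suc n. W (l * n) * ((x z + W l * y z) ^ n * Y' z))
        = (\<Sum>l<Suc n. W (l * n) * (x z + W l * y z) ^ n) * Y' z"
      by (subst sum_distrib_right) (simp add: mult.assoc)
    also have "\<dots> = (of_nat (Suc n) * of_nat n) * (x z ^ (n - 1) * (y z * Y' z))"
      using ru_extract[OF n, of "x z" "y z"] unfolding W_def by (simp add: mult.assoc)
    finally have S: "(\<Sum>l<Suc n. W (l * n) * ((x z + W l * y z) ^ n * Y' z)) = (of_nat (Suc n) * of_nat n) * (x z ^ (n - 1) * (y z * Y' z))" .
    have nz: "(of_nat (Suc n) * of_nat n :: complex) \<noteq> 0" using n by (simp only: of_nat_mult[symmetric] of_nat_eq_0_iff) simp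
    define c where "c = (of_nat (Suc n) * of_nat n :: complex)"
    have inv: "inverse c * (c * t) = t" for t using nz unfolding c_def[symmetric]
      by (simp add: mult.assoc[symmetric])
    have "n - 1 = card G - Suc k" unfolding n_def by simp
    thus ?thesis unfolding S c_def[symmetric] inv yY(3) by simp
  qed
  ultimately show ?case by simp
qed

lemma K3: "q \<in> Q1 (card G) \<Longrightarrow> q \<in> gid mG"
  using K2[of "card G" "\<lambda>_. 0" q] by (simp add: m1_def holo_const)

lemma K5: "q \<in> Q1 (card G * s) \<Longrightarrow> q \<in> gid (PG G s)"
proof (induction s arbitrary: q)
  case 0 thus ?case by (auto intro: gid_self)
next
  case (Suc s)
  from Suc.prems have "q \<in> Q1 (card G + card G * s)" by simp
  then obtain q1 q2 where q: "q1 \<in> Q1 (card G)" "q2 \<in> Q1 (card G * s)" "q = (\<lambda>z. q1 z * q2 z)"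
    using Q1_split by blast
  have "(\<lambda>z. q1 z * q2 z) \<in> gid (PG G (Suc s))"
  proof (rule gid_prod[OF K3[OF q(1)] Suc.IH[OF q(2)]], intro ballI)
    fix a b assume "a \<in> mG" "b \<in> PG G s"
    thus "(\<lambda>z. a z * b z) \<in> gid (PG G (Suc s))" by (intro gid_self) auto
  qed
  thus ?case using q(3) by simp
qed

lemma upper: "\<phi> \<in> RG \<Longrightarrow> \<phi> \<in> ideal_pow (inv_germs {mat 1}) (card G * s) \<Longrightarrow> \<phi> \<in> ideal_pow RG s"
proof -
  assume p: "\<phi> \<in> RG" "\<phi> \<in> ideal_pow (inv_germs {mat 1}) (card G * s)"
  have "\<phi> \<in> gid (PG G s)" using K6[OF p(2)] K5 by (blast intro: gid_trans)
  hence "rey \<phi> \<in> ideal_pow RG s" by (rule K7)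
  thus ?thesis using ip_geq[OF p(1) rey_of_inv[OF p(1)]] by blast
qed

end


lemma norm_smult_vec: "norm (c *s (x::complex^'n)) = norm c * norm x"
  unfolding norm_vec_def by (simp add: norm_mult L2_set_right_distrib)

lemma bl_line: "bounded_linear (\<lambda>t::complex. t *s (v::complex^'n))"
proof (rule bounded_linear_intro[where K="norm v"])
  fix x y :: complex show "(x + y) *s v = x *s v + y *s v" by (rule vector_sadd_rdistrib)
next
  fix r :: real and x :: complex show "(r *\<^sub>R x) *s v = r *\<^sub>R (x *s v)"
    by (simp add: vec_eq_iff mult_scaleR_left)
next
  fix x :: complex show "norm (x *s v) \<le> norm x * norm v" by (simp add: norm_smult_vec)
qed

lemma hpt_line: "hpt f (t *s v) \<Longrightarrow> (\<lambda>t. f (t *s v)) field_differentiable (at t)"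
proof -
  assume "hpt f (t *s v)"
  then obtain L where L: "(f has_derivative L) (at (t *s v))" "clin L" unfolding hpt_def by blast
  have "((\<lambda>t. f (t *s v)) has_derivative (\<lambda>h. L (h *s v))) (at t)"
    using has_derivative_compose[OF bounded_linear_imp_has_derivative[OF bl_line[of v]] L(1)]
    by (simp add: o_def)
  moreover have "(\<lambda>h. L (h *s v)) = (*) (L v)" using L(2) unfolding clin_def by (auto simp: mult.commute)
  ultimately have "((\<lambda>t. f (t *s v)) has_field_derivative L v) (at t)"
    by (simp add: has_field_derivative_def)
  thus ?thesis unfolding field_differentiable_def by blast
qed

lemma line_holo:
  assumes r: "\<forall>z\<in>ball 0 r. hpt f z"
  shows "(\<lambda>t. f (t *s v)) holomorphic_on ball 0 (r / (norm v + 1))"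
  unfolding holomorphic_on_def
proof
  fix t :: complex assume t: "t \<in> ball 0 (r / (norm v + 1))"
  have c: "0 < norm v + 1" using norm_ge_zero[of v] by linarith
  have "norm (t *s v) \<le> norm t * (norm v + 1)" by (simp add: norm_smult_vec mult_left_mono)
  also have "norm t < r / (norm v + 1)" using t by simp
  hence "norm t * (norm v + 1) < r" using pos_less_divide_eq[OF c] by blast
  finally have "hpt f (t *s v)" using r by auto
  thus "(\<lambda>t. f (t *s v)) field_differentiable (at t within ball 0 (r / (norm v + 1)))"
    using hpt_line field_differentiable_at_within by blast
qed

lemma holo_radius: "holo_germ f \<Longrightarrow> \<exists>r>0. \<forall>z\<in>ball 0 r. hpt f z"
  unfolding holo_germ_def hpt_def clin_def by blast

lemma rad_pos: "0 < r \<Longrightarrow> 0 < r / (norm (v::complex^'n) + 1)"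
proof -
  assume r: "0 < r"
  have "0 < norm v + 1" using norm_ge_zero[of v] by linarith
  thus ?thesis using r by simp
qed

definition Zg :: "nat \<Rightarrow> (complex \<Rightarrow> complex) \<Rightarrow> bool" where
  "Zg s F \<longleftrightarrow> (\<exists>r>0. \<exists>h. h holomorphic_on ball 0 r \<and> (\<forall>t\<in>ball 0 r. F t = t ^ s * h t))"

lemma Zg_hol: "F holomorphic_on ball 0 r \<Longrightarrow> r > 0 \<Longrightarrow> Zg 0 F"
  unfolding Zg_def by auto

lemma Zg_mult: "Zg a F \<Longrightarrow> Zg b H \<Longrightarrow> Zg (a + b) (\<lambda>t. F t * H t)"
proof -
  assume "Zg a F" "Zg b H"
  then obtain r1 h1 r2 h2 where 1: "r1 > 0" "h1 holomorphic_on ball 0 r1" "\<forall>t\<in>ball 0 r1. F t = t ^ a * h1 t"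
    and 2: "r2 > 0" "h2 holomorphic_on ball 0 r2" "\<forall>t\<in>ball 0 r2. H t = t ^ b * h2 t"
    unfolding Zg_def by blast
  let ?r = "min r1 r2"
  have "(\<lambda>t. h1 t * h2 t) holomorphic_on ball 0 ?r"
    by (intro holomorphic_on_mult holomorphic_on_subset[OF 1(2)] holomorphic_on_subset[OF 2(2)]) auto
  moreover have "\<forall>t\<in>ball 0 ?r. F t * H t = t ^ (a + b) * (h1 t * h2 t)"
    using 1(3) 2(3) by (auto simp: power_add)
  ultimately show ?thesis unfolding Zg_def using 1(1) 2(1) by (intro exI[of _ ?r]) auto
qed

lemma Zg_add: "Zg s F \<Longrightarrow> Zg s H \<Longrightarrow> Zg s (\<lambda>t. F t + H t)"
proof -
  assume "Zg s F" "Zg s H"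
  then obtain r1 h1 r2 h2 where 1: "r1 > 0" "h1 holomorphic_on ball 0 r1" "\<forall>t\<in>ball 0 r1. F t = t ^ s * h1 t"
    and 2: "r2 > 0" "h2 holomorphic_on ball 0 r2" "\<forall>t\<in>ball 0 r2. H t = t ^ s * h2 t"
    unfolding Zg_def by blast
  let ?r = "min r1 r2"
  have "(\<lambda>t. h1 t + h2 t) holomorphic_on ball 0 ?r"
    by (intro holomorphic_on_add holomorphic_on_subset[OF 1(2)] holomorphic_on_subset[OF 2(2)]) auto
  moreover have "\<forall>t\<in>ball 0 ?r. F t + H t = t ^ s * (h1 t + h2 t)"
    using 1(3) 2(3) by (auto simp: distrib_left)
  ultimately show ?thesis unfolding Zg_def using 1(1) 2(1) by (intro exI[of _ ?r]) auto
qed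

lemma Zg_zero: "Zg s (\<lambda>_. 0)"
  unfolding Zg_def by (rule exI[of _ 1]) (auto intro!: exI[of _ "\<lambda>_. 0"])

lemma Zg_sum: "(\<And>i. i < (n::nat) \<Longrightarrow> Zg s (F i)) \<Longrightarrow> Zg s (\<lambda>t. \<Sum>i<n. F i t)"
proof (induction n)
  case 0 thus ?case using Zg_zero by simp
next
  case (Suc n)
  have "Zg s (\<lambda>t. (\<Sum>i<n. F i t) + F n t)" using Suc by (intro Zg_add) auto
  thus ?case by simp
qed

lemma Zg_ev: "Zg s F \<Longrightarrow> eventually (\<lambda>t. H t = F t) (nhds 0) \<Longrightarrow> Zg s H"
proof -
  assume "Zg s F" "eventually (\<lambda>t. H t = F t) (nhds 0)"
  then obtain r h e where 1: "r > 0" "h holomorphic_on ball 0 r" "\<forall>t\<in>ball 0 r. F t = t ^ s * h t"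
    and e: "e > 0" "\<forall>t. dist t 0 < e \<longrightarrow> H t = F t"
    unfolding Zg_def eventually_nhds_metric by blast
  let ?r = "min r e"
  have "h holomorphic_on ball 0 ?r" by (rule holomorphic_on_subset[OF 1(2)]) auto
  moreover have "\<forall>t\<in>ball 0 ?r. H t = t ^ s * h t" using 1(3) e(2) by (auto simp: dist_commute)
  ultimately show ?thesis unfolding Zg_def using 1(1) e(1) by (intro exI[of _ ?r]) auto
qed

lemma Zg_1: "F holomorphic_on ball 0 r \<Longrightarrow> r > 0 \<Longrightarrow> F 0 = 0 \<Longrightarrow> Zg 1 F"
proof -
  assume F: "F holomorphic_on ball 0 r" "r > 0" "F 0 = 0"
  let ?h = "\<lambda>z. if z = 0 then deriv F 0 else (F z - F 0) / (z - 0)"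
  have "?h holomorphic_on ball 0 r" using F by (intro pole_lemma) auto
  moreover have "\<forall>t\<in>ball 0 r. F t = t ^ 1 * ?h t" using F(3) by auto
  ultimately show ?thesis unfolding Zg_def using F(2) by blast
qed

lemma line_ev: "eventually P (nhds 0) \<Longrightarrow> eventually (\<lambda>t. P (t *s (v::complex^'n))) (nhds (0::complex))"
proof -
  assume P: "eventually P (nhds 0)"
  have "((\<lambda>t. t *s v) \<longlongrightarrow> 0 *s v) (nhds 0)"
    by (rule bounded_linear.tendsto[OF bl_line filterlim_ident])
  hence "filterlim (\<lambda>t. t *s v) (nhds 0) (nhds 0)" by simp
  thus ?thesis using P by (simp add: filterlim_iff)
qed

lemma line_Zg0: "holo_germ f \<Longrightarrow> Zg 0 (\<lambda>t. f (t *s v))"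
proof -
  assume "holo_germ f"
  then obtain r where r: "r > 0" "\<forall>z\<in>ball 0 r. hpt f z" using holo_radius by blast
  show ?thesis
    by (rule Zg_hol[OF line_holo[OF r(2)] rad_pos[OF r(1)]])
qed

lemma line_Zg1: "a \<in> m1 \<Longrightarrow> Zg 1 (\<lambda>t. a (t *s v))"
proof -
  assume a: "a \<in> m1"
  then obtain r where r: "r > 0" "\<forall>z\<in>ball 0 r. hpt a z" using holo_radius by (auto simp: m1_def)
  show ?thesis
    by (rule Zg_1[OF line_holo[OF r(2)] rad_pos[OF r(1)]]) (use a in \<open>simp add: m1_def\<close>)
qed

lemma A1: "f \<in> ideal_pow (inv_germs {mat 1}) s \<Longrightarrow> Zg s (\<lambda>t. f (t *s v))"
proof (induction s arbitrary: f)
  case 0 thus ?case using line_Zg0 by (simp add: inv_germs_one)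
next
  case (Suc s)
  then obtain n :: nat and a b where ab: "\<forall>i<n. a i \<in> max_ideal (inv_germs {mat 1}) \<and> b i \<in> ideal_pow (inv_germs {mat 1}) s"
      "germ_eq f (\<lambda>z. \<Sum>i<n. a i z * b i z)" using ip_suc_iff[of f _ s] by blast
  have "Zg (1 + s) (\<lambda>t. a i (t *s v) * b i (t *s v))" if "i < n" for i
    using ab(1) that Suc.IH by (intro Zg_mult line_Zg1) (auto simp: max_ideal_one)
  hence "Zg (Suc s) (\<lambda>t. \<Sum>i<n. a i (t *s v) * b i (t *s v))" by (intro Zg_sum) auto
  moreover have "eventually (\<lambda>t. f (t *s v) = (\<Sum>i<n. a i (t *s v) * b i (t *s v))) (nhds 0)"
    using line_ev[OF ab(2)[unfolded germ_eq_def]] by simp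
  ultimately show ?case by (rule Zg_ev)
qed

lemma A2:
  assumes F: "F holomorphic_on ball 0 r" "r > 0" and Z: "\<And>s. Zg s F"
  shows "\<forall>w\<in>ball 0 r. F w = 0"
proof -
  have F0: "F 0 = 0" using Z[of 1] unfolding Zg_def by force
  show ?thesis
  proof (rule ccontr)
    assume "\<not> (\<forall>w\<in>ball 0 r. F w = 0)"
    then obtain w where w: "w \<in> ball 0 r" "F w \<noteq> 0" by blast
    have nc: "\<not> F constant_on ball 0 r"
      using w F0 F(2) unfolding constant_on_def by (metis centre_in_ball)
    have ex: "\<exists>g \<rho> n. 0 < n \<and> 0 < \<rho> \<and> g holomorphic_on ball 0 \<rho> \<and>
      (\<forall>w\<in>ball 0 \<rho>. F w = w ^ n * g w) \<and> (\<forall>w\<in>ball 0 \<rho>. g w \<noteq> 0)"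
      apply (rule holomorphic_factor_zero_nonconstant[OF F(1) open_ball connected_ball centre_in_ball[THEN iffD2, OF F(2)] F0 nc])
      subgoal for g' \<rho>' n' by (rule exI[of _ g'], rule exI[of _ \<rho>'], rule exI[of _ n']) auto
      done
    then obtain g \<rho> n where g: "0 < n" "0 < \<rho>" "g holomorphic_on ball 0 \<rho>"
      "\<forall>w\<in>ball 0 \<rho>. F w = w ^ n * g w" "\<forall>w\<in>ball 0 \<rho>. g w \<noteq> 0" by blast
    obtain r2 h where h: "r2 > 0" "h holomorphic_on ball 0 r2" "\<forall>t\<in>ball 0 r2. F t = t ^ Suc n * h t"
      using Z[of "Suc n"] unfolding Zg_def by blast
    have gc: "isCont g 0" using holomorphic_on_imp_continuous_on[OF g(3)] g(2)
      by (simp add: continuous_on_eq_continuous_at)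
    have hc: "isCont h 0" using holomorphic_on_imp_continuous_on[OF h(2)] h(1)
      by (simp add: continuous_on_eq_continuous_at)
    have P: "t * h t = g t" if t: "t \<noteq> 0" "dist t 0 < min \<rho> r2" for t
    proof -
      from t have tb: "t \<in> ball 0 \<rho>" "t \<in> ball 0 r2" by (auto simp: dist_commute)
      have F1: "F t = t ^ n * g t" using g(4) tb(1) by blast
      have F2: "F t = t ^ Suc n * h t" using h(3) tb(2) by blast
      have "t ^ n * g t = t ^ n * (t * h t)" unfolding F1[symmetric] F2 power_Suc by (simp only: mult_ac)
      thus "t * h t = g t" using t by simp
    qed
    have d: "min \<rho> r2 > 0" using g(2) h(1) by simp
    have ev: "eventually (\<lambda>t. t * h t = g t) (at 0)"
      unfolding eventually_at using d P by blast
    have "((\<lambda>t. t * h t) \<longlongrightarrow> 0 * h 0) (at 0)"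
      using hc by (intro tendsto_intros) (auto simp: isCont_def)
    hence "(g \<longlongrightarrow> 0) (at 0)" using ev by (simp add: tendsto_cong)
    moreover have "(g \<longlongrightarrow> g 0) (at 0)" using gc by (simp add: isCont_def)
    ultimately have "g 0 = 0" using tendsto_unique[OF at_neq_bot] by blast
    thus False using g(5) g(2) by simp
  qed
qed

lemma A3:
  assumes hol: "holo_germ \<phi>" and nz: "\<not> germ_eq \<phi> (\<lambda>_. 0)"
  shows "\<exists>B. \<forall>s. \<phi> \<in> ideal_pow (inv_germs {mat 1}) s \<longrightarrow> s \<le> B"
proof (rule ccontr)
  assume "\<not> ?thesis"
  hence all: "\<phi> \<in> ideal_pow (inv_germs {mat 1}) s" for s
    using ip_mono[of s] by (meson not_le_imp_less less_imp_le subsetD)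
  obtain r where r: "r > 0" "\<forall>z\<in>ball 0 r. hpt \<phi> z" using holo_radius[OF hol] by blast
  have zero: "\<phi> z = 0" if z: "z \<in> ball 0 (r / 2)" for z
  proof (cases "z = 0")
    case True
    have "Zg 1 (\<lambda>t. \<phi> (t *s z))" by (rule A1[OF all])
    then obtain r' h where r': "r' > 0" "\<forall>t\<in>ball 0 r'. \<phi> (t *s z) = t ^ 1 * h t" unfolding Zg_def by blast
    have "(0::complex) \<in> ball 0 r'" using r'(1) by simp
    hence "\<phi> (0 *s z) = 0 ^ 1 * h 0" using r'(2) by blast
    thus ?thesis using True by simp
  next
    case False
    define v where "v = inverse (complex_of_real (norm z)) *s z"
    have nv: "norm v = 1" using False unfolding v_def by (simp add: norm_smult_vec norm_inverse)
    have hol': "(\<lambda>t. \<phi> (t *s v)) holomorphic_on ball 0 (r / 2)"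
      using line_holo[OF r(2), of v] by (simp add: nv)
    have "\<forall>w\<in>ball 0 (r / 2). \<phi> (w *s v) = 0"
      by (rule A2[OF hol' _ A1[OF all]]) (use r in simp)
    moreover have "complex_of_real (norm z) \<in> ball 0 (r / 2)" using z by simp
    moreover have "complex_of_real (norm z) *s v = z" using False unfolding v_def
      by (simp add: vector_smult_assoc)
    ultimately show ?thesis by metis
  qed
  have "germ_eq \<phi> (\<lambda>_. 0)" unfolding germ_eq_def eventually_nhds_metric
    using zero r(1) by (intro exI[of _ "r / 2"]) (auto simp: dist_commute)
  thus False using nz by simp
qed


lemma ip_sub_one: "inv_germs G \<subseteq> inv_germs {mat 1} \<Longrightarrow> ideal_pow (inv_germs G) s \<subseteq> ideal_pow (inv_germs {mat 1}) s"
proof (induction s)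
  case 0 thus ?case by simp
next
  case (Suc s)
  have mi: "max_ideal (inv_germs G) \<subseteq> max_ideal (inv_germs {mat 1})"
    using Suc.prems unfolding max_ideal_def by auto
  show ?case
  proof
    fix f assume "f \<in> ideal_pow (inv_germs G) (Suc s)"
    then obtain n :: nat and a b where ab: "f \<in> inv_germs G" "\<forall>i<n. a i \<in> max_ideal (inv_germs G) \<and> b i \<in> ideal_pow (inv_germs G) s"
      "germ_eq f (\<lambda>z. \<Sum>i<n. a i z * b i z)" using ip_suc_iff[of f _ s] by blast
    have "f \<in> inv_germs {mat 1}" using ab(1) Suc.prems by blast
    moreover have "\<forall>i<n. a i \<in> max_ideal (inv_germs {mat 1}) \<and> b i \<in> ideal_pow (inv_germs {mat 1}) s"
      using ab(2) mi Suc.IH Suc.prems by blast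
    ultimately show "f \<in> ideal_pow (inv_germs {mat 1}) (Suc s)"
      using ab(3) ip_suc_iff[of f _ s] by blast
  qed
qed

theorem lemma3p4:
  fixes G :: "(complex^'n^'n) set"
  assumes "finite G"
    and "mat 1 \<in> G"
    and "\<forall>g\<in>G. \<forall>h\<in>G. g ** h \<in> G"
    and "\<forall>g\<in>G. invertible g"
    and "\<forall>g\<in>G. \<forall>v. v \<noteq> 0 \<and> g *v v = v \<longrightarrow> g = mat 1"
  shows "\<exists>C::real. C \<ge> 1 \<and>
     (\<forall>\<phi>. \<phi> \<in> inv_germs G \<and> \<not> germ_eq \<phi> (\<lambda>_. 0) \<longrightarrow>
        germ_ord (inv_germs G) \<phi> \<le> germ_ord (inv_germs {mat 1}) \<phi> \<and>
        real (germ_ord (inv_germs {mat 1}) \<phi>) \<le> C * real (germ_ord (inv_germs G) \<phi>)) \<and>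
     (G = {mat 1} \<longrightarrow> C = 1)"
proof -
  interpret fgrp G using assms(1-4) by unfold_locales
  define N where "N = card G"
  have N1: "N \<ge> 1" using card_pos unfolding N_def by simp
  define C where "C = (if G = {mat 1} then 1 else 2 * real N)"
  have C1: "C \<ge> 1" using N1 unfolding C_def by auto
  have sub1: "inv_germs G \<subseteq> inv_germs {mat 1}" using RG_holo inv_germs_one by blast
  have main: "germ_ord (inv_germs G) \<phi> \<le> germ_ord (inv_germs {mat 1}) \<phi> \<and>
        real (germ_ord (inv_germs {mat 1}) \<phi>) \<le> C * real (germ_ord (inv_germs G) \<phi>)"
    if \<phi>: "\<phi> \<in> inv_germs G" "\<not> germ_eq \<phi> (\<lambda>_. 0)" for \<phi>
  proof -
    let ?S1 = "\<lambda>s. \<phi> \<in> ideal_pow (inv_germs {mat 1}) s"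
    let ?SG = "\<lambda>s. \<phi> \<in> ideal_pow (inv_germs G) s"
    obtain B where B: "\<forall>s. ?S1 s \<longrightarrow> s \<le> B" using A3[OF RG_holo[OF \<phi>(1)] \<phi>(2)] by blast
    have GS1: "?SG s \<Longrightarrow> ?S1 s" for s using ip_sub_one[OF sub1] by blast
    have BG: "\<forall>s. ?SG s \<longrightarrow> s \<le> B" using B GS1 by blast
    have S10: "?S1 0" using \<phi>(1) sub1 by auto
    have SG0: "?SG 0" using \<phi>(1) by simp
    define M where "M = germ_ord (inv_germs {mat 1}) \<phi>"
    define s where "s = germ_ord (inv_germs G) \<phi>"
    have SM: "?S1 M" unfolding M_def germ_ord_def by (rule GreatestI_nat[of ?S1 0 B]) (use S10 B in auto)
    have Mmax: "?S1 t \<Longrightarrow> t \<le> M" for t unfolding M_def germ_ord_def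
      by (rule Greatest_le_nat[of ?S1 t B]) (use B in auto)
    have Ss: "?SG s" unfolding s_def germ_ord_def by (rule GreatestI_nat[of ?SG 0 B]) (use SG0 BG in auto)
    have smax: "?SG t \<Longrightarrow> t \<le> s" for t unfolding s_def germ_ord_def
      by (rule Greatest_le_nat[of ?SG t B]) (use BG in auto)
    have part1: "s \<le> M" using Mmax GS1 Ss by blast
    have part2: "real M \<le> C * real s"
    proof (cases "G = {mat 1}")
      case True
      hence "M = s" unfolding M_def s_def by simp
      thus ?thesis unfolding C_def using True by simp
    next
      case False
      hence CN: "C = 2 * real N" unfolding C_def by simp
      show ?thesis
      proof (cases "M = 0")
        case True thus ?thesis using C1 by simp
      next
        case False
        have le1: "Suc 0 \<le> M" using False by simp
        have "ideal_pow (inv_germs {mat 1}) M \<subseteq> ideal_pow (inv_germs {mat 1}) (Suc 0)" using le1 by (rule ip_mono)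
        from this SM have "?S1 (Suc 0)" by (rule subsetD)
        then obtain n :: nat and a b where ab: "\<forall>i<n. a i \<in> max_ideal (inv_germs {mat 1}) \<and> b i \<in> ideal_pow (inv_germs {mat 1}) 0"
          "germ_eq \<phi> (\<lambda>z. \<Sum>i<n. a i z * b i z)" using ip_suc_iff[of \<phi> "inv_germs {mat 1}" 0] by blast
        have "\<phi> 0 = (\<Sum>i<n. a i 0 * b i 0)" using germ_eq_0[OF ab(2)] by simp
        also have "\<dots> = 0" using ab(1) by (intro sum.neutral) (auto simp: max_ideal_def)
        finally have p0: "\<phi> 0 = 0" .
        have "?SG (Suc 0)"
        proof -
          have g: "germ_eq \<phi> (\<lambda>z. \<Sum>i<(1::nat). (\<lambda>_. \<phi>) i z * (\<lambda>_ _. 1) i z)" by (simp add: germ_eq_refl)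
          have m: "\<phi> \<in> max_ideal (inv_germs G)" using \<phi>(1) p0 by (simp add: max_ideal_def)
          have o: "(\<lambda>_. 1) \<in> ideal_pow (inv_germs G) 0" using RG_const by simp
          have "\<forall>i<(1::nat). (\<lambda>_. \<phi>) i \<in> max_ideal (inv_germs G) \<and> (\<lambda>_ _. 1) i \<in> ideal_pow (inv_germs G) 0"
            using m o by simp
          hence "\<exists>(n::nat) a b. (\<forall>i<n. a i \<in> max_ideal (inv_germs G) \<and> b i \<in> ideal_pow (inv_germs G) 0)
               \<and> germ_eq \<phi> (\<lambda>z. \<Sum>i<n. a i z * b i z)" using g
            by (intro exI[of _ "1::nat"] exI[of _ "\<lambda>_. \<phi>"] exI[of _ "\<lambda>_ _. 1"] conjI)
          thus ?thesis using ip_suc_iff[of \<phi> "inv_germs G" 0] \<phi>(1) by simp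
        qed
        hence s1: "Suc 0 \<le> s" by (rule smax)
        define q where "q = M div N"
        have "N * q \<le> M" unfolding q_def by simp
        hence "ideal_pow (inv_germs {mat 1}) M \<subseteq> ideal_pow (inv_germs {mat 1}) (N * q)" by (rule ip_mono)
        from this SM have "?S1 (N * q)" by (rule subsetD)
        hence "?S1 (card G * q)" unfolding N_def .
        hence "?SG q" by (rule upper[OF \<phi>(1)])
        hence qs: "q \<le> s" using smax by blast
        have "M = N * q + M mod N" unfolding q_def by simp
        moreover have "M mod N < N" using N1 by simp
        ultimately have "M < N * q + N" by linarith
        also have "\<dots> \<le> N * s + N * s" using qs s1 N1 by (simp add: add_mono)
        finally have "M \<le> 2 * N * s" by simp
        hence "real M \<le> real (2 * N * s)" by (rule of_nat_mono)
        thus ?thesis unfolding CN by simp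
      qed
    qed
    show ?thesis using part1 part2 unfolding M_def s_def by simp
  qed
  show ?thesis
    using C1 main by (intro exI[of _ C]) (auto simp: C_def)
qed


end
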